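(* Let $a>0$ and let $Y^{(1)},Y^{(2)}$ be independent $\chi^2_1$ random variables. Then the cdf $H(u)=P(Y^{(1)}+aY^{(2)}\le u)$ is concave on $(0,\infty)$. *)

theory Defs
  imports "HOL-Probability.Probability"
begin

definition chi2_1_density :: "real \<Rightarrow> real" where
  "chi2_1_density y = (if y > 0 then exp (- y / 2) / sqrt (2 * pi * y) else 0)"

end

theory Submission
  imports Defs
begin
lemma f_meas[measurable]: "chi2_1_density \<in> borel_measurable borel"
  unfolding chi2_1_density_def by measurable
lemma f_nn: "chi2_1_density y \<ge> 0" unfolding chi2_1_density_def by auto

lemma subst_lemma:
  fixes a s :: real assumes a: "a > 0" and s: "s > 0"
  shows "(\<integral>\<^sup>+y. ennreal (chi2_1_density (s - a*y) * chi2_1_density y) \<partial>lborel)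
   = (\<integral>\<^sup>+t. ennreal (indicator {0<..<1} t * (1/(2*pi * sqrt a * sqrt(t*(1-t)))) * exp (- s * ((1-t)/2 + t/(2*a)))) \<partial>lborel)"
proof -
  have "(\<integral>\<^sup>+y. ennreal (chi2_1_density (s - a*y) * chi2_1_density y) \<partial>lborel)
     = \<bar>s/a\<bar> * (\<integral>\<^sup>+t. ennreal (chi2_1_density (s - a*(0 + s/a*t)) * chi2_1_density (0 + s/a*t)) \<partial>lborel)"
    by (rule nn_integral_real_affine) (use a s in auto)
  also have "\<dots> = (\<integral>\<^sup>+t. ennreal (s/a * (chi2_1_density (s - a*(0 + s/a*t)) * chi2_1_density (0 + s/a*t))) \<partial>lborel)"
    using a s by (subst nn_integral_cmult[symmetric]) (auto intro!: nn_integral_cong simp: f_nn ennreal_mult[symmetric])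
  also have "\<dots> = (\<integral>\<^sup>+t. ennreal (indicator {0<..<1} t * (1/(2*pi * sqrt a * sqrt(t*(1-t)))) * exp (- s * ((1-t)/2 + t/(2*a)))) \<partial>lborel)"
  proof (rule nn_integral_cong)
    fix t :: real
    show "ennreal (s/a * (chi2_1_density (s - a*(0 + s/a*t)) * chi2_1_density (0 + s/a*t)))
       = ennreal (indicator {0<..<1} t * (1/(2*pi * sqrt a * sqrt(t*(1-t)))) * exp (- s * ((1-t)/2 + t/(2*a))))"
    proof (cases "0 < t \<and> t < 1")
      case True
      have e: "s - a*(0 + s/a*t) = s*(1-t)" "0 + s/a*t = s*t/a" using a by (auto simp: field_simps)
      have pos: "s*(1-t) > 0" "s*t/a > 0" using True a s by auto
      have sq1: "sqrt (2 * pi * (s*(1-t))) * sqrt (2 * pi * (s*t/a)) = sqrt ((2*pi * s)^2 * (t*(1-t)) / a)"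
        by (simp add: real_sqrt_mult[symmetric] power2_eq_square field_simps)
      have sq2: "sqrt ((2*pi * s)^2 * (t*(1-t)) / a) = (2*pi * s) * sqrt (t*(1-t)) / sqrt a"
        using s by (simp add: real_sqrt_mult real_sqrt_divide)
      have ex: "exp (- (s*(1-t)) / 2) * exp (- (s*t/a) / 2) = exp (- s * ((1-t)/2 + t/(2*a)))"
        by (simp add: exp_add[symmetric] field_simps)
      have sa: "sqrt a * sqrt a = a" using a by simp
      have tt: "sqrt (t*(1-t)) > 0" using True by simp
      have "s/a * (chi2_1_density (s*(1-t)) * chi2_1_density (s*t/a))
          = s/a * (exp (- (s*(1-t)) / 2) * exp (- (s*t/a) / 2)) / (sqrt (2 * pi * (s*(1-t))) * sqrt (2 * pi * (s*t/a)))"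
        unfolding chi2_1_density_def using pos by simp
      also have "\<dots> = s/a * exp (- s * ((1-t)/2 + t/(2*a))) / ((2*pi * s) * sqrt (t*(1-t)) / sqrt a)"
        unfolding ex sq1 sq2 ..
      also have "\<dots> = indicator {0<..<1} t * (1/(2*pi * sqrt a * sqrt(t*(1-t)))) * exp (- s * ((1-t)/2 + t/(2*a)))"
        using True a s tt sa pi_gt_zero by (simp add: field_simps)
      moreover have "s - a * (s * t / a) = s*(1-t)" using a by (simp add: field_simps)
      ultimately show ?thesis by (simp only: e)
    next
      case False
      have e: "s - a*(0 + s/a*t) = s*(1-t)" "0 + s/a*t = s*t/a" using a by (auto simp: field_simps)
      have "t \<le> 0 \<or> t \<ge> 1" using False by auto
      then have "s - a*(0 + s/a*t) \<le> 0 \<or> 0 + s/a*t \<le> 0" unfolding e using a s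
        by (auto simp: mult_nonneg_nonpos divide_nonpos_pos)
      then show ?thesis using False unfolding chi2_1_density_def by auto
    qed
  qed
  finally show ?thesis .
qed
definition KK :: "real \<Rightarrow> real \<Rightarrow> real" where
  "KK a t = indicator {0<..<1} t * (1/(2*pi * sqrt a * sqrt(t*(1-t))))"
definition cc :: "real \<Rightarrow> real \<Rightarrow> real" where
  "cc a t = (1-t)/2 + t/(2*a)"

lemma KK_meas[measurable]: "KK a \<in> borel_measurable borel"
  unfolding KK_def by measurable
lemma cc_meas[measurable]: "cc a \<in> borel_measurable borel"
  unfolding cc_def by measurable
lemma KK_nn: "a > 0 \<Longrightarrow> KK a t \<ge> 0" unfolding KK_def by (auto simp: indicator_def)

lemma repr:
  fixes M :: "'s measure" and Y1 Y2 :: "'s \<Rightarrow> real" and a u :: real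
  assumes P: "prob_space M"
    and a: "a > 0" and u: "u > 0"
    and D1: "distributed M lborel Y1 (\<lambda>y. ennreal (chi2_1_density y))"
    and D2: "distributed M lborel Y2 (\<lambda>y. ennreal (chi2_1_density y))"
    and I: "prob_space.indep_var M borel Y1 borel Y2"
  shows "emeasure M {\<omega> \<in> space M. Y1 \<omega> + a * Y2 \<omega> \<le> u}
     = (\<integral>\<^sup>+t. ennreal (KK a t * ((1 - exp (- u * cc a t)) / cc a t)) \<partial>lborel)"
proof -
  interpret prob_space M by fact
  have I': "indep_var lborel Y1 lborel Y2"
  proof -
    have e1: "(case i of True \<Rightarrow> lborel | False \<Rightarrow> lborel) = (lborel::real measure)" for i by (cases i) auto
    have e2: "(case i of True \<Rightarrow> borel | False \<Rightarrow> borel) = (borel::real measure)" for i by (cases i) auto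
    show ?thesis using I by (simp add: indep_var_def indep_vars_def2 e1 e2)
  qed
  have J: "distributed M (lborel \<Otimes>\<^sub>M lborel) (\<lambda>x. (Y1 x, Y2 x))
      (\<lambda>(x, y). ennreal (chi2_1_density x) * ennreal (chi2_1_density y))"
    by (rule distributed_joint_indep[OF sigma_finite_lborel sigma_finite_lborel D1 D2 I'])
  define A where "A = {p \<in> space (lborel \<Otimes>\<^sub>M lborel). fst p + a * snd p \<le> (u::real)}"
  have A: "A \<in> sets (lborel \<Otimes>\<^sub>M lborel)" unfolding A_def by measurable
  have "{\<omega> \<in> space M. Y1 \<omega> + a * Y2 \<omega> \<le> u} = (\<lambda>x. (Y1 x, Y2 x)) -` A \<inter> space M"
    unfolding A_def by (auto simp: space_pair_measure)
  then have "emeasure M {\<omega> \<in> space M. Y1 \<omega> + a * Y2 \<omega> \<le> u}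
     = (\<integral>\<^sup>+p. (\<lambda>(x, y). ennreal (chi2_1_density x) * ennreal (chi2_1_density y)) p * indicator A p
         \<partial>(lborel \<Otimes>\<^sub>M lborel))"
    using distributed_emeasure[OF J A] by simp
  also have "\<dots> = (\<integral>\<^sup>+p. ennreal (chi2_1_density (fst p) * chi2_1_density (snd p) * indicator {..u} (fst p + a * snd p))
         \<partial>(lborel \<Otimes>\<^sub>M lborel))"
    by (intro nn_integral_cong) (auto simp: A_def space_pair_measure ennreal_mult f_nn indicator_def)
  also have "\<dots> = (\<integral>\<^sup>+y. \<integral>\<^sup>+x. ennreal (chi2_1_density x * chi2_1_density y * indicator {..u} (x + a * y)) \<partial>lborel \<partial>lborel)"
    apply (subst lborel_pair.nn_integral_snd[symmetric])
    apply measurable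
    done
  also have "\<dots> = (\<integral>\<^sup>+y. \<integral>\<^sup>+s. ennreal (chi2_1_density (s - a * y) * chi2_1_density y * indicator {..u} s) \<partial>lborel \<partial>lborel)"
  proof (rule nn_integral_cong)
    fix y :: real
    have m: "(\<lambda>x. ennreal (chi2_1_density x * chi2_1_density y * indicator {..u} (x + a * y))) \<in> borel_measurable borel"
      by measurable
    have "(\<integral>\<^sup>+x. ennreal (chi2_1_density x * chi2_1_density y * indicator {..u} (x + a * y)) \<partial>lborel)
      = ennreal \<bar>1::real\<bar> * (\<integral>\<^sup>+x. ennreal (chi2_1_density (- a * y + 1 * x) * chi2_1_density y * indicator {..u} ((- a * y + 1 * x) + a * y)) \<partial>lborel)"
      by (rule nn_integral_real_affine[OF m]) simp
    then show "(\<integral>\<^sup>+x. ennreal (chi2_1_density x * chi2_1_density y * indicator {..u} (x + a * y)) \<partial>lborel)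
      = (\<integral>\<^sup>+s. ennreal (chi2_1_density (s - a * y) * chi2_1_density y * indicator {..u} s) \<partial>lborel)"
      by simp
  qed
  also have "\<dots> = (\<integral>\<^sup>+s. \<integral>\<^sup>+y. ennreal (chi2_1_density (s - a * y) * chi2_1_density y * indicator {..u} s) \<partial>lborel \<partial>lborel)"
    by (rule lborel_pair.Fubini') measurable
  also have "\<dots> = (\<integral>\<^sup>+s. \<integral>\<^sup>+t. ennreal (indicator {0<..u} s * (KK a t * exp (- s * cc a t))) \<partial>lborel \<partial>lborel)"
  proof (rule nn_integral_cong)
    fix s :: real
    show "(\<integral>\<^sup>+y. ennreal (chi2_1_density (s - a * y) * chi2_1_density y * indicator {..u} s) \<partial>lborel)
      = (\<integral>\<^sup>+t. ennreal (indicator {0<..u} s * (KK a t * exp (- s * cc a t))) \<partial>lborel)"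
    proof (cases "s > 0")
      case True
      have "(\<integral>\<^sup>+y. ennreal (chi2_1_density (s - a * y) * chi2_1_density y * indicator {..u} s) \<partial>lborel)
         = ennreal (indicator {0<..u} s) * (\<integral>\<^sup>+y. ennreal (chi2_1_density (s - a * y) * chi2_1_density y) \<partial>lborel)"
        using True by (subst nn_integral_cmult[symmetric]) (auto intro!: nn_integral_cong simp: indicator_def)
      also have "\<dots> = ennreal (indicator {0<..u} s) * (\<integral>\<^sup>+t. ennreal (KK a t * exp (- s * cc a t)) \<partial>lborel)"
        using subst_lemma[OF a True] by (simp add: KK_def cc_def mult.assoc)
      also have "\<dots> = (\<integral>\<^sup>+t. ennreal (indicator {0<..u} s * (KK a t * exp (- s * cc a t))) \<partial>lborel)"
        using a by (subst nn_integral_cmult[symmetric]) (auto intro!: nn_integral_cong simp: ennreal_mult KK_nn)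
      finally show ?thesis .
    next
      case False
      have z: "chi2_1_density (s - a * y) * chi2_1_density y = 0" for y
      proof (cases "y > 0")
        case True
        then have "s - a * y \<le> 0" using False a by (simp add: not_less) (meson less_eq_real_def mult_pos_pos order_trans)
        then show ?thesis by (simp add: chi2_1_density_def)
      qed (simp add: chi2_1_density_def)
      have "(\<integral>\<^sup>+y. ennreal (chi2_1_density (s - a * y) * chi2_1_density y * indicator {..u} s) \<partial>lborel) = (\<integral>\<^sup>+(y::real). (0::ennreal) \<partial>lborel)"
        by (simp only: z mult_zero_left ennreal_0)
      then show ?thesis using False by simp
    qed
  qed
  also have "\<dots> = (\<integral>\<^sup>+t. \<integral>\<^sup>+s. ennreal (indicator {0<..u} s * (KK a t * exp (- s * cc a t))) \<partial>lborel \<partial>lborel)"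
    by (rule lborel_pair.Fubini') measurable
  also have "\<dots> = (\<integral>\<^sup>+t. ennreal (KK a t * ((1 - exp (- u * cc a t)) / cc a t)) \<partial>lborel)"
  proof (rule nn_integral_cong)
    fix t :: real
    show "(\<integral>\<^sup>+s. ennreal (indicator {0<..u} s * (KK a t * exp (- s * cc a t))) \<partial>lborel)
       = ennreal (KK a t * ((1 - exp (- u * cc a t)) / cc a t))"
    proof (cases "0 < t \<and> t < 1")
      case False
      then show ?thesis by (simp add: KK_def)
    next
      case True
      have c: "cc a t > 0" using True a unfolding cc_def by (auto intro!: add_pos_pos)
      have "(\<integral>\<^sup>+s. ennreal (indicator {0<..u} s * (KK a t * exp (- s * cc a t))) \<partial>lborel)
          = (\<integral>\<^sup>+s. ennreal (KK a t) * (ennreal (exp (- s * cc a t)) * indicator {0..u} s) \<partial>lborel)"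
      proof (rule nn_integral_cong_AE)
        show "AE s in lborel. ennreal (indicator {0<..u} s * (KK a t * exp (- s * cc a t)))
            = ennreal (KK a t) * (ennreal (exp (- s * cc a t)) * indicator {0..u} s)"
          using AE_lborel_singleton[of 0]
          by eventually_elim (auto simp: indicator_def ennreal_mult KK_nn a)
      qed
      also have "\<dots> = ennreal (KK a t) * (\<integral>\<^sup>+s. ennreal (exp (- s * cc a t)) * indicator {0..u} s \<partial>lborel)"
        by (rule nn_integral_cmult) measurable
      also have "(\<integral>\<^sup>+s. ennreal (exp (- s * cc a t)) * indicator {0..u} s \<partial>lborel)
          = ennreal ((\<lambda>s. - exp (- s * cc a t) / cc a t) u - (\<lambda>s. - exp (- s * cc a t) / cc a t) 0)"
        by (rule nn_integral_FTC_Icc) (use c u in \<open>auto intro!: derivative_eq_intros\<close>)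
      also have "ennreal (KK a t) * ennreal ((\<lambda>s. - exp (- s * cc a t) / cc a t) u - (\<lambda>s. - exp (- s * cc a t) / cc a t) 0)
          = ennreal (KK a t * ((1 - exp (- u * cc a t)) / cc a t))"
        using c u a by (subst ennreal_mult) (auto simp: KK_nn field_simps)
      finally show ?thesis .
    qed
  qed
  finally show ?thesis .
qed


lemma cc_pos: "a > 0 \<Longrightarrow> 0 < t \<Longrightarrow> t < 1 \<Longrightarrow> cc a t > 0"
  unfolding cc_def by (auto intro!: add_pos_pos)

lemma G_nn: assumes a: "a > 0" and u: "u > 0"
  shows "KK a t * ((1 - exp (- u * cc a t)) / cc a t) \<ge> 0"
proof (cases "0 < t \<and> t < 1")
  case True
  then have c: "cc a t > 0" using cc_pos a by auto
  then have "exp (- u * cc a t) \<le> 1" using u by simp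
  then show ?thesis using c KK_nn[OF a] by simp
qed (simp add: KK_def)

lemma G_conc: assumes a: "a > 0" and x: "x > 0" and y: "y > 0" and p: "p \<ge> 0" and q: "q \<ge> 0" and pq: "p + q = 1"
  shows "p * (KK a t * ((1 - exp (- x * cc a t)) / cc a t)) + q * (KK a t * ((1 - exp (- y * cc a t)) / cc a t))
     \<le> KK a t * ((1 - exp (- (p * x + q * y) * cc a t)) / cc a t)"
proof (cases "0 < t \<and> t < 1")
  case True
  then have c: "cc a t > 0" using cc_pos a by auto
  have "exp (cc a t * ((1 - q) *\<^sub>R (- x) + q *\<^sub>R (- y))) \<le> (1 - q) * exp (cc a t * (- x)) + q * exp (cc a t * (- y))"
    using convex_onD[OF convex_on_exp[of "cc a t"], of q "- x" "- y"] c p q pq by auto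
  moreover have pe: "p = 1 - q" using pq by simp
  moreover have "cc a t * ((1 - q) *\<^sub>R (- x) + q *\<^sub>R (- y)) = - (p * x + q * y) * cc a t"
    unfolding pe by (simp add: algebra_simps)
  moreover have "cc a t * (- x) = - x * cc a t" "cc a t * (- y) = - y * cc a t" by simp_all
  ultimately have e: "exp (- (p * x + q * y) * cc a t) \<le> p * exp (- x * cc a t) + q * exp (- y * cc a t)"
    by (simp add: mult.commute)
  have "p * (KK a t * ((1 - exp (- x * cc a t)) / cc a t)) + q * (KK a t * ((1 - exp (- y * cc a t)) / cc a t))
      = (KK a t / cc a t) * ((p + q) - (p * exp (- x * cc a t) + q * exp (- y * cc a t)))"
    using c by (simp add: field_simps)
  also have "\<dots> \<le> (KK a t / cc a t) * (1 - exp (- (p * x + q * y) * cc a t))"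
    using e pq c KK_nn[OF a, of t] by (intro mult_left_mono) auto
  finally show ?thesis by simp
qed (simp add: KK_def)

theorem mainTheorem11:
  fixes M :: "'s measure" and Y1 Y2 :: "'s \<Rightarrow> real" and a :: real
  assumes "prob_space M"
    and "a > 0"
    and "distributed M lborel Y1 (\<lambda>y. ennreal (chi2_1_density y))"
    and "distributed M lborel Y2 (\<lambda>y. ennreal (chi2_1_density y))"
    and "prob_space.indep_var M borel Y1 borel Y2"
  shows "concave_on {0<..}
           (\<lambda>u. measure M {\<omega> \<in> space M. Y1 \<omega> + a * Y2 \<omega> \<le> u})"
proof -
  interpret prob_space M by fact
  have a: "a > 0" by fact
  define H where "H u = measure M {\<omega> \<in> space M. Y1 \<omega> + a * Y2 \<omega> \<le> u}" for u
  define G where "G u t = KK a t * ((1 - exp (- u * cc a t)) / cc a t)" for u t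
  have E: "ennreal (H u) = (\<integral>\<^sup>+t. ennreal (G u t) \<partial>lborel)" if "u > 0" for u
    unfolding H_def G_def using repr[OF assms(1,2) that assms(3-5)] emeasure_eq_measure by simp
  have Gm[measurable]: "(\<lambda>t. G u t) \<in> borel_measurable borel" for u
    unfolding G_def by measurable
  have "p * H x + q * H y \<le> H (p * x + q * y)"
    if x: "x > 0" and y: "y > 0" and p: "p \<ge> 0" and q: "q \<ge> 0" and pq: "p + q = 1" for x y p q :: real
  proof -
    have z: "p * x + q * y > 0"
    proof (cases "p > 0")
      case True then show ?thesis using x y q by (simp add: add_pos_nonneg)
    next
      case False then have "q > 0" using p pq by auto
      then show ?thesis using x y p by (simp add: add_nonneg_pos)
    qed
    have "ennreal (p * H x + q * H y) = ennreal p * ennreal (H x) + ennreal q * ennreal (H y)"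
      using p q by (simp add: ennreal_plus ennreal_mult H_def)
    also have "\<dots> = ennreal p * (\<integral>\<^sup>+t. ennreal (G x t) \<partial>lborel) + ennreal q * (\<integral>\<^sup>+t. ennreal (G y t) \<partial>lborel)"
      using E x y by simp
    also have "\<dots> = (\<integral>\<^sup>+t. ennreal p * ennreal (G x t) + ennreal q * ennreal (G y t) \<partial>lborel)"
      by (simp add: nn_integral_add nn_integral_cmult)
    also have "\<dots> \<le> (\<integral>\<^sup>+t. ennreal (G (p * x + q * y) t) \<partial>lborel)"
    proof (rule nn_integral_mono)
      fix t
      have "ennreal p * ennreal (G x t) + ennreal q * ennreal (G y t) = ennreal (p * G x t + q * G y t)"
        using p q G_nn[OF a x, of t, folded G_def] G_nn[OF a y, of t, folded G_def]
        by (simp add: ennreal_plus ennreal_mult)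
      also have "\<dots> \<le> ennreal (G (p * x + q * y) t)"
        using G_conc[OF a x y p q pq, of t] by (simp add: G_def ennreal_leI)
      finally show "ennreal p * ennreal (G x t) + ennreal q * ennreal (G y t) \<le> ennreal (G (p * x + q * y) t)" .
    qed
    also have "\<dots> = ennreal (H (p * x + q * y))" using E z by simp
    finally show ?thesis by (simp add: ennreal_le_iff H_def)
  qed
  then show ?thesis unfolding concave_on_iff H_def by auto
qed

end
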